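(* If $\Phi$ is of type $A_n$ or $C_n$, the set of standard parabolic facets of $\mathcal P_\Phi$ is the set of convex hulls $\operatorname{conv}(I)$ of the maximal abelian ideals $I$ of $\Phi^+$.
   Context: $\Phi$ is a finite irreducible crystallographic root system of rank $n$ with inner product $(-,-)$, basis $\Pi=\{\alpha_1,\dots,\alpha_n\}$ (Bourbaki numbering), positive roots $\Phi^+$, highest root $\theta=\sum_i m_i\alpha_i$; $\breve\omega_i$ is the fundamental coweight ($(\alpha_j,\breve\omega_i)=\delta_{ij}$). $\mathcal P_\Phi=\operatorname{conv}(\Phi)$. For $i\in[n]$, $F_i=\operatorname{conv}\{\beta\in\Phi^+\mid(\beta,\breve\omega_i)=m_i\}$ is a face of $\mathcal P_\Phi$; the standard parabolic facets are those $F_i$ that are facets (faces of dimension $n-1$) of $\mathcal P_\Phi$. The root poset is $\Phi^+$ with $\beta\ge\gamma$ iff $\beta-\gamma$ is a nonnegative integer combination of simple roots; an abelian ideal is a subset of $\Phi^+$ closed upward in the root poset with $(I+I)\cap\Phi=\emptyset$, and maximal means maximal under inclusion. *)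

theory Defs
  imports "HOL-Analysis.Analysis"
begin

definition root_system :: "'a::euclidean_space set \<Rightarrow> bool" where
  "root_system \<Phi> \<longleftrightarrow> finite \<Phi> \<and> 0 \<notin> \<Phi> \<and> span \<Phi> = UNIV \<and>
     (\<forall>a\<in>\<Phi>. \<forall>b\<in>\<Phi>. b - (2 * (b \<bullet> a) / (a \<bullet> a)) *\<^sub>R a \<in> \<Phi>) \<and>
     (\<forall>a\<in>\<Phi>. \<forall>b\<in>\<Phi>. 2 * (b \<bullet> a) / (a \<bullet> a) \<in> \<int>) \<and>
     (\<forall>a\<in>\<Phi>. \<forall>c::real. c *\<^sub>R a \<in> \<Phi> \<longrightarrow> c = 1 \<or> c = -1)"

text \<open>Simple roots alpha 0, ..., alpha (n-1) (Bourbaki numbering shifted by one) form a base.\<close>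
definition is_base :: "'a::euclidean_space set \<Rightarrow> (nat \<Rightarrow> 'a) \<Rightarrow> nat \<Rightarrow> bool" where
  "is_base \<Phi> \<alpha> n \<longleftrightarrow> (\<forall>i<n. \<alpha> i \<in> \<Phi>) \<and> inj_on \<alpha> {..<n} \<and> independent (\<alpha> ` {..<n}) \<and>
     (\<forall>\<beta>\<in>\<Phi>. \<exists>c::nat \<Rightarrow> int. \<beta> = (\<Sum>i<n. of_int (c i) *\<^sub>R \<alpha> i) \<and>
        ((\<forall>i<n. c i \<ge> 0) \<or> (\<forall>i<n. c i \<le> 0)))"

definition nonneg_comb :: "(nat \<Rightarrow> 'a::euclidean_space) \<Rightarrow> nat \<Rightarrow> 'a \<Rightarrow> bool" where
  "nonneg_comb \<alpha> n v \<longleftrightarrow> (\<exists>c::nat \<Rightarrow> nat. v = (\<Sum>i<n. real (c i) *\<^sub>R \<alpha> i))"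

definition pos_roots :: "'a::euclidean_space set \<Rightarrow> (nat \<Rightarrow> 'a) \<Rightarrow> nat \<Rightarrow> 'a set" where
  "pos_roots \<Phi> \<alpha> n = {\<beta>\<in>\<Phi>. nonneg_comb \<alpha> n \<beta>}"

text \<open>Root poset order: root_le alpha n gamma beta means gamma <= beta.\<close>
definition root_le :: "(nat \<Rightarrow> 'a::euclidean_space) \<Rightarrow> nat \<Rightarrow> 'a \<Rightarrow> 'a \<Rightarrow> bool" where
  "root_le \<alpha> n \<gamma> \<beta> \<longleftrightarrow> nonneg_comb \<alpha> n (\<beta> - \<gamma>)"

text \<open>Cartan matrices (entry i j = 2 (alpha_i, alpha_j) / (alpha_j, alpha_j)), 0-indexed.\<close>
definition cartan_A :: "nat \<Rightarrow> nat \<Rightarrow> nat \<Rightarrow> real" where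
  "cartan_A n i j = (if i = j then 2 else if i = j + 1 \<or> j = i + 1 then -1 else 0)"

definition cartan_C :: "nat \<Rightarrow> nat \<Rightarrow> nat \<Rightarrow> real" where
  "cartan_C n i j = (if i = j then 2 else if i = n - 1 \<and> j = n - 2 then -2
      else if i = j + 1 \<or> j = i + 1 then -1 else 0)"

definition has_cartan :: "(nat \<Rightarrow> 'a::euclidean_space) \<Rightarrow> nat \<Rightarrow> (nat \<Rightarrow> nat \<Rightarrow> real) \<Rightarrow> bool" where
  "has_cartan \<alpha> n C \<longleftrightarrow> (\<forall>i<n. \<forall>j<n. 2 * (\<alpha> i \<bullet> \<alpha> j) / (\<alpha> j \<bullet> \<alpha> j) = C i j)"

definition fund_coweight :: "(nat \<Rightarrow> 'a::euclidean_space) \<Rightarrow> nat \<Rightarrow> nat \<Rightarrow> 'a" where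
  "fund_coweight \<alpha> n i = (THE w. \<forall>j<n. \<alpha> j \<bullet> w = (if j = i then 1 else 0))"

definition highest_root :: "'a::euclidean_space set \<Rightarrow> (nat \<Rightarrow> 'a) \<Rightarrow> nat \<Rightarrow> 'a" where
  "highest_root \<Phi> \<alpha> n = (THE \<theta>. \<theta> \<in> pos_roots \<Phi> \<alpha> n \<and> (\<forall>\<beta>\<in>pos_roots \<Phi> \<alpha> n. root_le \<alpha> n \<beta> \<theta>))"

definition std_parabolic_face :: "'a::euclidean_space set \<Rightarrow> (nat \<Rightarrow> 'a) \<Rightarrow> nat \<Rightarrow> nat \<Rightarrow> 'a set" where
  "std_parabolic_face \<Phi> \<alpha> n i = convex hull {\<beta> \<in> pos_roots \<Phi> \<alpha> n.
      \<beta> \<bullet> fund_coweight \<alpha> n i = highest_root \<Phi> \<alpha> n \<bullet> fund_coweight \<alpha> n i}"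

definition abelian_ideal :: "'a::euclidean_space set \<Rightarrow> (nat \<Rightarrow> 'a) \<Rightarrow> nat \<Rightarrow> 'a set \<Rightarrow> bool" where
  "abelian_ideal \<Phi> \<alpha> n I \<longleftrightarrow> I \<subseteq> pos_roots \<Phi> \<alpha> n \<and>
     (\<forall>\<beta>\<in>I. \<forall>\<gamma>\<in>pos_roots \<Phi> \<alpha> n. root_le \<alpha> n \<beta> \<gamma> \<longrightarrow> \<gamma> \<in> I) \<and>
     (\<forall>\<beta>\<in>I. \<forall>\<gamma>\<in>I. \<beta> + \<gamma> \<notin> \<Phi>)"

definition max_abelian_ideal :: "'a::euclidean_space set \<Rightarrow> (nat \<Rightarrow> 'a) \<Rightarrow> nat \<Rightarrow> 'a set \<Rightarrow> bool" where
  "max_abelian_ideal \<Phi> \<alpha> n I \<longleftrightarrow> abelian_ideal \<Phi> \<alpha> n I \<and>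
     (\<forall>J. abelian_ideal \<Phi> \<alpha> n J \<and> I \<subseteq> J \<longrightarrow> J = I)"

end

theory Submission
  imports Defs
begin


locale rs =
  fixes \<Phi> :: "'a::euclidean_space set" and \<alpha> :: "nat \<Rightarrow> 'a" and n :: nat
  assumes RS: "root_system \<Phi>" and N: "n = DIM('a)" and B: "is_base \<Phi> \<alpha> n"
begin

lemma alpha_in: "i < n \<Longrightarrow> \<alpha> i \<in> \<Phi>" using B unfolding is_base_def by auto
lemma indep: "independent (\<alpha> ` {..<n})" using B unfolding is_base_def by auto
lemma injA: "inj_on \<alpha> {..<n}" using B unfolding is_base_def by auto
lemma zero_notin: "0 \<notin> \<Phi>" using RS unfolding root_system_def by auto
lemma finPhi: "finite \<Phi>" using RS unfolding root_system_def by auto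
lemma alpha_nz: "i < n \<Longrightarrow> \<alpha> i \<noteq> 0" using alpha_in zero_notin by metis

lemma card_img: "card (\<alpha> ` {..<n}) = n"
  using injA by (simp add: card_image)

lemma span_all: "span (\<alpha> ` {..<n}) = UNIV"
proof -
  have "independent (\<alpha> ` {..<n})" by (rule indep)
  moreover have "card (\<alpha> ` {..<n}) = dim (UNIV::'a set)" using card_img N by simp
  ultimately have "UNIV \<subseteq> span (\<alpha> ` {..<n})"
    using card_eq_dim[of "\<alpha> ` {..<n}" UNIV] by auto
  then show ?thesis by auto
qed

lemma orth_zero: assumes "\<And>j. j < n \<Longrightarrow> \<alpha> j \<bullet> v = 0" shows "v = 0"
proof -
  have "orthogonal v v"
    by (rule orthogonal_to_span[where S="\<alpha> ` {..<n}"]) (use span_all assms in \<open>auto simp: orthogonal_def inner_commute\<close>)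
  then show ?thesis by (simp add: orthogonal_def)
qed

lemma coweight_ex: assumes "i < n" shows "\<exists>w. \<forall>j<n. \<alpha> j \<bullet> w = (if j = i then 1 else 0)"
proof -
  let ?S = "\<alpha> ` ({..<n} - {i})"
  have ind: "independent ?S" using indep by (rule independent_mono) auto
  have "card ?S = n - 1" using injA assms
    by (subst card_image) (auto intro: inj_on_subset)
  then have "dim ?S < DIM('a)" using dim_eq_card_independent[OF ind] N assms by simp
  then obtain x where x: "x \<noteq> 0" "\<And>y. y \<in> span ?S \<Longrightarrow> orthogonal x y"
    using orthogonal_to_subspace_exists by blast
  have o: "\<alpha> j \<bullet> x = 0" if "j < n" "j \<noteq> i" for j
    using x(2)[of "\<alpha> j"] that by (auto simp: orthogonal_def inner_commute intro: span_base)
  have nz: "\<alpha> i \<bullet> x \<noteq> 0"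
  proof
    assume "\<alpha> i \<bullet> x = 0"
    then have "x = 0" using o by (intro orth_zero) (metis)
    then show False using x by simp
  qed
  show ?thesis
    by (rule exI[of _ "x /\<^sub>R (\<alpha> i \<bullet> x)"]) (use o nz in auto)
qed

definition \<omega> where "\<omega> i = fund_coweight \<alpha> n i"

lemma omega_lt: assumes "i < n" shows "\<forall>j<n. \<alpha> j \<bullet> \<omega> i = (if j = i then 1 else 0)"
proof -
  obtain w where w: "\<forall>j<n. \<alpha> j \<bullet> w = (if j = i then 1 else 0)" using coweight_ex[OF assms] by blast
  have u: "w' = w" if h: "\<forall>j<n. \<alpha> j \<bullet> w' = (if j = i then 1 else 0)" for w'
  proof -
    have "\<And>j. j < n \<Longrightarrow> \<alpha> j \<bullet> (w' - w) = 0" using h w by (simp add: inner_diff_right)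
    then have "w' - w = 0" by (rule orth_zero)
    then show ?thesis by simp
  qed
  have "\<omega> i = w" unfolding \<omega>_def fund_coweight_def
    by (rule the_equality) (rule w, rule u)
  then show ?thesis using w by simp
qed

lemma omega_ge: assumes "\<not> i < n" shows "\<omega> i = 0"
proof -
  have u: "w' = 0" if h: "\<forall>j<n. \<alpha> j \<bullet> w' = (if j = i then 1 else 0)" for w'
  proof -
    have "\<And>j. j < n \<Longrightarrow> \<alpha> j \<bullet> w' = 0" using h assms by auto
    then show "w' = 0" by (rule orth_zero)
  qed
  show ?thesis unfolding \<omega>_def fund_coweight_def
    by (rule the_equality) (use assms in simp, rule u)
qed

lemma omega: "j < n \<Longrightarrow> \<alpha> j \<bullet> \<omega> i = (if j = i then 1 else 0)"
  using omega_lt omega_ge by (cases "i < n") auto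

definition cf where "cf \<beta> i = \<beta> \<bullet> \<omega> i"
definition vec :: "(nat \<Rightarrow> real) \<Rightarrow> 'a" where "vec c = (\<Sum>i<n. c i *\<^sub>R \<alpha> i)"

lemma cf_vec: "j < n \<Longrightarrow> cf (vec c) j = c j"
  unfolding cf_def vec_def by (simp add: inner_sum_left omega if_distrib cong: if_cong)

lemma cf_linear: "cf (x + y) j = cf x j + cf y j" "cf (x - y) j = cf x j - cf y j"
  "cf (r *\<^sub>R x) j = r * cf x j" "cf (- x) j = - cf x j"
  unfolding cf_def by (auto simp: inner_add_left inner_diff_left)

lemma vec_cf: "vec (cf \<beta>) = \<beta>"
proof -
  have "\<beta> \<in> span (\<alpha> ` {..<n})" using span_all by auto
  then obtain u where u: "\<beta> = (\<Sum>v\<in>\<alpha> ` {..<n}. u v *\<^sub>R v)"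
    using span_finite[of "\<alpha> ` {..<n}"] by auto
  then have b: "\<beta> = (\<Sum>i<n. u (\<alpha> i) *\<^sub>R \<alpha> i)"
    using injA by (simp add: sum.reindex)
  then have "cf \<beta> j = u (\<alpha> j)" if "j < n" for j
    using cf_vec[OF that, of "\<lambda>i. u (\<alpha> i)"] unfolding vec_def by simp
  then show ?thesis unfolding vec_def by (subst (2) b) simp
qed

lemma vec_eq: "(\<And>j. j < n \<Longrightarrow> c j = d j) \<Longrightarrow> vec c = vec d"
  unfolding vec_def by simp

lemma cf_eq_imp: "(\<And>j. j < n \<Longrightarrow> cf x j = cf y j) \<Longrightarrow> x = y"
  by (metis vec_cf vec_eq)

lemma cf_alpha: "i < n \<Longrightarrow> j < n \<Longrightarrow> cf (\<alpha> i) j = (if j = i then 1 else 0)"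
  unfolding cf_def by (simp add: omega inner_commute)

lemma root_cf: assumes "\<beta> \<in> \<Phi>"
  shows "(\<forall>i<n. cf \<beta> i \<in> \<int>) \<and> ((\<forall>i<n. cf \<beta> i \<ge> 0) \<or> (\<forall>i<n. cf \<beta> i \<le> 0))"
proof -
  obtain c :: "nat \<Rightarrow> int" where c: "\<beta> = (\<Sum>i<n. of_int (c i) *\<^sub>R \<alpha> i)"
    "(\<forall>i<n. c i \<ge> 0) \<or> (\<forall>i<n. c i \<le> 0)"
    using B assms unfolding is_base_def by blast
  have "\<beta> = vec (\<lambda>i. of_int (c i))" using c unfolding vec_def by simp
  then have "cf \<beta> i = of_int (c i)" if "i < n" for i using cf_vec[OF that] by simp
  then show ?thesis using c(2) by auto
qed

lemma nonneg_comb_iff: "nonneg_comb \<alpha> n v \<longleftrightarrow> (\<forall>i<n. \<exists>k::nat. cf v i = real k)"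
proof
  assume "nonneg_comb \<alpha> n v"
  then obtain c :: "nat \<Rightarrow> nat" where "v = (\<Sum>i<n. real (c i) *\<^sub>R \<alpha> i)" unfolding nonneg_comb_def by blast
  then have "v = vec (\<lambda>i. real (c i))" unfolding vec_def by simp
  then show "\<forall>i<n. \<exists>k::nat. cf v i = real k" using cf_vec by auto
next
  assume h: "\<forall>i<n. \<exists>k::nat. cf v i = real k"
  have "\<forall>i. \<exists>k::nat. i < n \<longrightarrow> cf v i = real k" using h by auto
  then obtain c where c: "\<forall>i. i < n \<longrightarrow> cf v i = real (c i)" by (rule choice[THEN exE])
  have "cf v i = real (c i)" if "i < n" for i using c that by auto
  then have "v = (\<Sum>i<n. real (c i) *\<^sub>R \<alpha> i)" using vec_cf[of v] unfolding vec_def by simp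
  then show "nonneg_comb \<alpha> n v" unfolding nonneg_comb_def by blast
qed

lemma nat_real_iff: "(\<exists>k::nat. x = real k) \<longleftrightarrow> x \<in> \<int> \<and> x \<ge> 0"
proof
  assume "x \<in> \<int> \<and> x \<ge> 0"
  then obtain z where z: "x = of_int z" "z \<ge> 0" by (auto elim: Ints_cases)
  then show "\<exists>k::nat. x = real k" by (intro exI[of _ "nat z"]) auto
qed auto

lemma pos_iff: "\<beta> \<in> pos_roots \<Phi> \<alpha> n \<longleftrightarrow> \<beta> \<in> \<Phi> \<and> (\<forall>i<n. cf \<beta> i \<ge> 0)"
  unfolding pos_roots_def nonneg_comb_iff nat_real_iff using root_cf by auto

lemma root_le_iff: "root_le \<alpha> n \<gamma> \<beta> \<longleftrightarrow> (\<forall>i<n. cf \<beta> i - cf \<gamma> i \<in> \<int> \<and> cf \<gamma> i \<le> cf \<beta> i)"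
  unfolding root_le_def nonneg_comb_iff nat_real_iff cf_linear by simp

end



locale rsc = rs \<Phi> \<alpha> n for \<Phi> :: "'a::euclidean_space set" and \<alpha> n +
  fixes C :: "nat \<Rightarrow> nat \<Rightarrow> real"
  assumes cartan: "has_cartan \<alpha> n C"
begin

definition pair where "pair \<beta> i = 2 * (\<beta> \<bullet> \<alpha> i) / (\<alpha> i \<bullet> \<alpha> i)"
definition pc where "pc c i = (\<Sum>j<n. c j * C j i)"

lemma refl_in: "\<beta> \<in> \<Phi> \<Longrightarrow> i < n \<Longrightarrow> \<beta> - pair \<beta> i *\<^sub>R \<alpha> i \<in> \<Phi>"
  using RS alpha_in unfolding root_system_def pair_def by auto

lemma pair_int: "\<beta> \<in> \<Phi> \<Longrightarrow> i < n \<Longrightarrow> pair \<beta> i \<in> \<int>"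
  using RS alpha_in unfolding root_system_def pair_def by auto

lemma reduced: "\<beta> \<in> \<Phi> \<Longrightarrow> c *\<^sub>R \<beta> \<in> \<Phi> \<Longrightarrow> c = 1 \<or> c = -1"
  using RS unfolding root_system_def by auto

lemma pair_pc: assumes "i < n" shows "pair \<beta> i = pc (cf \<beta>) i"
proof -
  have ai: "\<alpha> i \<bullet> \<alpha> i \<noteq> 0" using alpha_nz[OF assms] by simp
  have "\<beta> \<bullet> \<alpha> i = (\<Sum>j<n. cf \<beta> j * (\<alpha> j \<bullet> \<alpha> i))"
    by (subst (1) vec_cf[symmetric]) (simp add: vec_def inner_sum_left)
  then have "pair \<beta> i = (\<Sum>j<n. cf \<beta> j * (2 * (\<alpha> j \<bullet> \<alpha> i) / (\<alpha> i \<bullet> \<alpha> i)))"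
    unfolding pair_def by (simp add: sum_distrib_left sum_divide_distrib algebra_simps)
  also have "\<dots> = pc (cf \<beta>) i" unfolding pc_def
    using cartan assms unfolding has_cartan_def by (intro sum.cong) auto
  finally show ?thesis .
qed

lemma pc_cong: "(\<And>j. j < n \<Longrightarrow> c j = d j) \<Longrightarrow> pc c i = pc d i"
  unfolding pc_def by simp

lemma pair_alpha: "i < n \<Longrightarrow> pair (\<alpha> i) i = 2"
  unfolding pair_def using alpha_nz by simp

lemma pair_lin: "pair (x - r *\<^sub>R y) i = pair x i - r * pair y i"
  unfolding pair_def by (simp add: inner_diff_left algebra_simps add_divide_distrib diff_divide_distrib)

lemma vec_single: "i < n \<Longrightarrow> (\<And>j. j < n \<Longrightarrow> j \<noteq> i \<Longrightarrow> c j = 0) \<Longrightarrow> vec c = c i *\<^sub>R \<alpha> i"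
  unfolding vec_def
  by (subst sum.cong[OF refl, where h="\<lambda>j. if j = i then c i *\<^sub>R \<alpha> i else 0"]) auto

lemma vec_add_single: "i < n \<Longrightarrow> vec (\<lambda>j. c j + (if j = i then k else 0)) = vec c + k *\<^sub>R \<alpha> i"
proof -
  have "(\<Sum>j<n. (c j + (if j = i then k else 0)) *\<^sub>R \<alpha> j) = (\<Sum>j<n. c j *\<^sub>R \<alpha> j + (if j = i then k *\<^sub>R \<alpha> j else 0))"
    by (intro sum.cong) (auto simp: scaleR_add_left)
  also have "\<dots> = (\<Sum>j<n. c j *\<^sub>R \<alpha> j) + (\<Sum>j<n. if j = i then k *\<^sub>R \<alpha> j else 0)"
    by (rule sum.distrib)
  finally show "i < n \<Longrightarrow> ?thesis" unfolding vec_def by simp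
qed

lemma generation:
  assumes base: "\<And>i. i < n \<Longrightarrow> P (cf (\<alpha> i))"
    and step: "\<And>\<beta> i. \<beta> \<in> pos_roots \<Phi> \<alpha> n \<Longrightarrow> P (cf \<beta>) \<Longrightarrow> i < n \<Longrightarrow> pair \<beta> i < 0
        \<Longrightarrow> P (cf (\<beta> - pair \<beta> i *\<^sub>R \<alpha> i))"
  shows "\<beta> \<in> pos_roots \<Phi> \<alpha> n \<Longrightarrow> P (cf \<beta>)"
proof -
  have "\<forall>\<beta>. \<beta> \<in> pos_roots \<Phi> \<alpha> n \<longrightarrow> (\<Sum>i<n. cf \<beta> i) \<le> real k \<longrightarrow> P (cf \<beta>)" for k
  proof (induction k)
    case 0
    show ?case
    proof (intro allI impI)
      fix \<beta> assume b: "\<beta> \<in> pos_roots \<Phi> \<alpha> n" "(\<Sum>i<n. cf \<beta> i) \<le> real 0"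
      have nn: "\<forall>i<n. cf \<beta> i \<ge> 0" using b pos_iff by auto
      have s0: "(\<Sum>i<n. cf \<beta> i) = 0" using b(2) sum_nonneg[of "{..<n}" "cf \<beta>"] nn by force
      then have "\<forall>i\<in>{..<n}. cf \<beta> i = 0" using sum_nonneg_eq_0_iff[of "{..<n}" "cf \<beta>"] nn by auto
      then have "\<beta> = 0" using cf_eq_imp[of \<beta> 0] by (simp add: cf_def)
      then show "P (cf \<beta>)" using b pos_iff zero_notin by auto
    qed
  next
    case (Suc k)
    show ?case
    proof (intro allI impI)
      fix \<beta> assume b: "\<beta> \<in> pos_roots \<Phi> \<alpha> n" "(\<Sum>i<n. cf \<beta> i) \<le> real (Suc k)"
      have bP: "\<beta> \<in> \<Phi>" and nn: "\<forall>i<n. cf \<beta> i \<ge> 0" using b pos_iff by auto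
      show "P (cf \<beta>)"
      proof (cases "\<exists>i<n. \<beta> = \<alpha> i")
        case True then show ?thesis using base by auto
      next
        case False
        have "\<beta> \<noteq> 0" using bP zero_notin by auto
        then have "0 < \<beta> \<bullet> \<beta>" by simp
        also have "\<beta> \<bullet> \<beta> = (\<Sum>i<n. cf \<beta> i * (\<beta> \<bullet> \<alpha> i))"
          by (subst (1) vec_cf[symmetric]) (simp add: vec_def inner_sum_right)
        finally obtain i where i: "i < n" "0 < cf \<beta> i * (\<beta> \<bullet> \<alpha> i)"
          by (metis (no_types, lifting) lessThan_iff not_less sum_nonpos)
        have ci: "cf \<beta> i > 0" "\<beta> \<bullet> \<alpha> i > 0" using i nn
          by (auto simp: zero_less_mult_iff)
        define p where "p = pair \<beta> i"
        have ppos: "p > 0" unfolding p_def pair_def using ci alpha_nz[OF i(1)] by simp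
        have pint: "p \<in> \<int>" using pair_int[OF bP i(1)] p_def by simp
        have p1: "p \<ge> 1"
        proof -
          from pint obtain z where z: "p = of_int z" by (auto elim: Ints_cases)
          with ppos have "z \<ge> 1" by simp
          with z show ?thesis by simp
        qed
        define \<beta>' where "\<beta>' = \<beta> - p *\<^sub>R \<alpha> i"
        have b'P: "\<beta>' \<in> \<Phi>" unfolding \<beta>'_def p_def using refl_in[OF bP i(1)] .
        have cf': "cf \<beta>' j = cf \<beta> j - (if j = i then p else 0)" if "j < n" for j
          unfolding \<beta>'_def using cf_alpha[OF i(1) that] by (simp add: cf_linear)
        obtain j where j: "j < n" "j \<noteq> i" "cf \<beta> j \<noteq> 0"
        proof (rule ccontr)
          assume "\<not> thesis"
          then have z: "\<And>j. j < n \<Longrightarrow> j \<noteq> i \<Longrightarrow> cf \<beta> j = 0" using that by blast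
          have "\<beta> = cf \<beta> i *\<^sub>R \<alpha> i" using vec_single[of i "cf \<beta>", OF i(1) z] vec_cf by simp
          then have "cf \<beta> i = 1 \<or> cf \<beta> i = -1" using reduced[OF alpha_in[OF i(1)]] bP by metis
          then have "\<beta> = \<alpha> i" using ci \<open>\<beta> = cf \<beta> i *\<^sub>R \<alpha> i\<close> by auto
          then show False using False i by auto
        qed
        have "cf \<beta>' j > 0" using cf'[OF j(1)] j nn by auto
        then have nn': "\<forall>i<n. cf \<beta>' i \<ge> 0" using root_cf[OF b'P] j(1) by fastforce
        have b'pos: "\<beta>' \<in> pos_roots \<Phi> \<alpha> n" using pos_iff b'P nn' by auto
        have "(\<Sum>j<n. cf \<beta>' j) = (\<Sum>j<n. cf \<beta> j - (if j = i then p else 0))"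
          using cf' by simp
        also have "\<dots> = (\<Sum>j<n. cf \<beta> j) - p" using i(1) by (simp add: sum_subtractf)
        finally have "(\<Sum>j<n. cf \<beta>' j) \<le> real k" using b(2) p1 by simp
        then have P': "P (cf \<beta>')" using Suc b'pos by blast
        have pb': "pair \<beta>' i = - p" unfolding \<beta>'_def using pair_lin[of \<beta> p "\<alpha> i" i] pair_alpha[OF i(1)] p_def by simp
        have "\<beta>' - pair \<beta>' i *\<^sub>R \<alpha> i = \<beta>' + p *\<^sub>R \<alpha> i" using pb' by simp
        also have "\<dots> = \<beta>" by (simp add: \<beta>'_def)
        finally have "\<beta>' - pair \<beta>' i *\<^sub>R \<alpha> i = \<beta>" .
        then show ?thesis using step[OF b'pos P' i(1)] pb' ppos by simp
      qed
    qed
  qed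
  moreover assume "\<beta> \<in> pos_roots \<Phi> \<alpha> n"
  moreover obtain k :: nat where "(\<Sum>i<n. cf \<beta> i) \<le> real k" using real_arch_simple by blast
  ultimately show "P (cf \<beta>)" by blast
qed

lemma exists_step:
  assumes "vec c \<in> \<Phi>" "i < n" "pc c i = - k"
  shows "vec (\<lambda>j. c j + (if j = i then k else 0)) \<in> \<Phi>"
proof -
  have "pair (vec c) i = pc c i" using pair_pc[OF assms(2)] cf_vec pc_cong by metis
  then show ?thesis using refl_in[OF assms(1,2)] assms(3) vec_add_single[OF assms(2)] by simp
qed

end



context rsc begin

lemma neg_in: "\<beta> \<in> \<Phi> \<Longrightarrow> - \<beta> \<in> \<Phi>"
proof -
  assume b: "\<beta> \<in> \<Phi>"
  then have "\<beta> \<noteq> 0" using zero_notin by auto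
  then have "\<beta> - (2 * (\<beta> \<bullet> \<beta>) / (\<beta> \<bullet> \<beta>)) *\<^sub>R \<beta> = - \<beta>" by (simp add: scaleR_2)
  moreover have "\<beta> - (2 * (\<beta> \<bullet> \<beta>) / (\<beta> \<bullet> \<beta>)) *\<^sub>R \<beta> \<in> \<Phi>" using RS b unfolding root_system_def by blast
  ultimately show ?thesis by simp
qed

lemma roots_split: "\<beta> \<in> \<Phi> \<Longrightarrow> \<beta> \<in> pos_roots \<Phi> \<alpha> n \<or> - \<beta> \<in> pos_roots \<Phi> \<alpha> n"
  using root_cf[of \<beta>] neg_in[of \<beta>] pos_iff by (auto simp: cf_linear)

lemma highest_eq:
  assumes "\<theta> \<in> pos_roots \<Phi> \<alpha> n" "\<And>\<beta>. \<beta> \<in> pos_roots \<Phi> \<alpha> n \<Longrightarrow> root_le \<alpha> n \<beta> \<theta>"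
  shows "highest_root \<Phi> \<alpha> n = \<theta>"
  unfolding highest_root_def
proof (rule the_equality)
  show "\<theta> \<in> pos_roots \<Phi> \<alpha> n \<and> (\<forall>\<beta>\<in>pos_roots \<Phi> \<alpha> n. root_le \<alpha> n \<beta> \<theta>)" using assms by auto
  fix t assume t: "t \<in> pos_roots \<Phi> \<alpha> n \<and> (\<forall>\<beta>\<in>pos_roots \<Phi> \<alpha> n. root_le \<alpha> n \<beta> t)"
  have "root_le \<alpha> n t \<theta>" "root_le \<alpha> n \<theta> t" using t assms by auto
  then show "t = \<theta>" unfolding root_le_iff by (intro cf_eq_imp) (meson order_antisym)
qed

lemma face_lemma:
  assumes bound: "\<And>\<beta>. \<beta> \<in> \<Phi> \<Longrightarrow> cf \<beta> i \<le> M" and M: "M > 0"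
  shows "convex hull {\<beta> \<in> pos_roots \<Phi> \<alpha> n. cf \<beta> i = M} face_of convex hull \<Phi>"
proof -
  let ?H = "{x. \<omega> i \<bullet> x = M}"
  let ?F = "{\<beta> \<in> pos_roots \<Phi> \<alpha> n. cf \<beta> i = M}"
  have sub: "convex hull \<Phi> \<subseteq> {x. \<omega> i \<bullet> x \<le> M}"
  proof (rule hull_minimal)
    show "\<Phi> \<subseteq> {x. \<omega> i \<bullet> x \<le> M}" using bound by (auto simp: cf_def inner_commute)
    show "convex {x. \<omega> i \<bullet> x \<le> M}" by (rule convex_halfspace_le)
  qed
  have face: "(convex hull \<Phi> \<inter> ?H) face_of convex hull \<Phi>"
    by (rule face_of_Int_supporting_hyperplane_le) (use sub in auto)
  have eqF: "\<Phi> \<inter> ?H = ?F"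
  proof
    show "\<Phi> \<inter> ?H \<subseteq> ?F"
    proof
      fix x assume x: "x \<in> \<Phi> \<inter> ?H"
      then have c: "cf x i = M" by (simp add: cf_def inner_commute)
      have "i < n"
      proof (rule ccontr)
        assume "\<not> i < n" then have "\<omega> i = 0" by (rule omega_ge)
        then show False using c M by (simp add: cf_def)
      qed
      then have "x \<in> pos_roots \<Phi> \<alpha> n" using roots_split[of x] x c M pos_iff by (force simp: cf_linear)
      then show "x \<in> ?F" using c by simp
    qed
    show "?F \<subseteq> \<Phi> \<inter> ?H" using pos_iff by (auto simp: cf_def inner_commute)
  qed
  have "convex hull \<Phi> \<inter> ?H = convex hull ?F"
  proof
    obtain S' where S': "S' \<subseteq> \<Phi>" "convex hull \<Phi> \<inter> ?H = convex hull S'"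
      using face_of_convex_hull_subset[OF finite_imp_compact[OF finPhi] face] by blast
    have "S' \<subseteq> ?H" using S' hull_subset[of S' convex] by blast
    then have "S' \<subseteq> ?F" using S' eqF by blast
    then show "convex hull \<Phi> \<inter> ?H \<subseteq> convex hull ?F" using S' hull_mono by blast
    have "convex hull ?F \<subseteq> convex hull \<Phi>" using eqF by (intro hull_mono) blast
    moreover have "convex hull ?F \<subseteq> ?H" by (rule hull_minimal) (use eqF convex_hyperplane in auto)
    ultimately show "convex hull ?F \<subseteq> convex hull \<Phi> \<inter> ?H" by blast
  qed
  then show ?thesis using face by simp
qed

lemma aff_dim_full:
  fixes S :: "'a set"
  assumes "S \<subseteq> {x. w \<bullet> x = M}" "M \<noteq> 0" "span S = UNIV"
  shows "aff_dim S = int n - 1"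
proof -
  have "affine hull S \<subseteq> {x. w \<bullet> x = M}" by (rule hull_minimal) (use assms affine_hyperplane in auto)
  then have n0: "0 \<notin> affine hull S" using assms(2) by auto
  have "aff_dim (insert 0 S) = int (dim ((+) (- 0) ` insert 0 S))"
    by (rule aff_dim_eq_dim) (simp add: hull_inc)
  also have "\<dots> = int (dim (insert 0 S))" by simp
  also have "dim (insert 0 S) = dim (span (insert 0 S))" by (rule dim_span[symmetric])
  also have "span (insert 0 S) = UNIV" using assms(3) by (simp add: span_insert_0)
  finally have "aff_dim (insert 0 S) = int n" using N by simp
  then show ?thesis using aff_dim_insert[of 0 S] n0 by simp
qed

lemma aff_dim_small:
  fixes S :: "'a set"
  assumes "S \<subseteq> {x. w \<bullet> x = M}" "M \<noteq> 0" "S \<subseteq> {x. v \<bullet> x = 0}" "v \<noteq> 0"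
  shows "aff_dim S < int n - 1"
proof -
  have "affine hull S \<subseteq> {x. w \<bullet> x = M}" by (rule hull_minimal) (use assms affine_hyperplane in auto)
  then have n0: "0 \<notin> affine hull S" using assms(2) by auto
  have "aff_dim (insert 0 S) = int (dim ((+) (- 0) ` insert 0 S))"
    by (rule aff_dim_eq_dim) (simp add: hull_inc)
  also have "\<dots> = int (dim (insert 0 S))" by simp
  finally have e: "aff_dim (insert 0 S) = int (dim (insert 0 S))" .
  have "dim (insert 0 S) \<le> dim {x. v \<bullet> x = 0}" using assms(3) by (intro dim_subset) auto
  also have "\<dots> = n - 1" using dim_hyperplane[OF assms(4)] N by simp
  finally have d: "dim (insert 0 S) \<le> n - 1" .
  have nn: "n \<ge> 1" using N by simp
  have "aff_dim (insert 0 S) \<le> int n - 1" using e d nn by (simp add: of_nat_diff)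
  moreover note nn
  ultimately show ?thesis using aff_dim_insert[of 0 S] n0 by simp
qed

lemma abelian_level:
  assumes bound: "\<And>\<beta>. \<beta> \<in> \<Phi> \<Longrightarrow> cf \<beta> i \<le> M" and M: "M > 0"
  shows "abelian_ideal \<Phi> \<alpha> n {\<beta> \<in> pos_roots \<Phi> \<alpha> n. cf \<beta> i = M}"
proof -
  show ?thesis unfolding abelian_ideal_def
  proof (intro conjI ballI impI)
    show "{\<beta> \<in> pos_roots \<Phi> \<alpha> n. cf \<beta> i = M} \<subseteq> pos_roots \<Phi> \<alpha> n" by auto
  next
    fix \<beta> \<gamma> assume b: "\<beta> \<in> {\<beta> \<in> pos_roots \<Phi> \<alpha> n. cf \<beta> i = M}" and g: "\<gamma> \<in> pos_roots \<Phi> \<alpha> n"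
      and le: "root_le \<alpha> n \<beta> \<gamma>"
    have i: "i < n"
    proof (rule ccontr)
      assume "\<not> i < n" then have "\<omega> i = 0" by (rule omega_ge)
      then show False using b M by (simp add: cf_def)
    qed
    have "cf \<gamma> i \<ge> M" using le b i unfolding root_le_iff by auto
    moreover have "cf \<gamma> i \<le> M" using bound g pos_iff by auto
    ultimately show "\<gamma> \<in> {\<beta> \<in> pos_roots \<Phi> \<alpha> n. cf \<beta> i = M}" using g by auto
  next
    fix \<beta> \<gamma> assume b: "\<beta> \<in> {\<beta> \<in> pos_roots \<Phi> \<alpha> n. cf \<beta> i = M}" and g: "\<gamma> \<in> {\<beta> \<in> pos_roots \<Phi> \<alpha> n. cf \<beta> i = M}"
    have "cf (\<beta> + \<gamma>) i = 2 * M" using b g by (simp add: cf_linear)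
    then show "\<beta> + \<gamma> \<notin> \<Phi>" using bound[of "\<beta> + \<gamma>"] M by auto
  qed
qed

lemma vec_diff: "vec c - vec d = vec (\<lambda>j. c j - d j)"
  unfolding vec_def by (simp add: sum_subtractf scaleR_diff_left)

lemma vec_add: "vec c + vec d = vec (\<lambda>j. c j + d j)"
  unfolding vec_def by (simp add: sum.distrib scaleR_add_left)

lemma vec_alpha: "i < n \<Longrightarrow> (\<And>j. j < n \<Longrightarrow> c j = (if j = i then 1 else 0)) \<Longrightarrow> vec c = \<alpha> i"
  using vec_eq[of c "cf (\<alpha> i)"] vec_cf[of "\<alpha> i"] cf_alpha by simp

lemma span_univ: "(\<And>i. i < n \<Longrightarrow> \<alpha> i \<in> span S) \<Longrightarrow> span S = UNIV"
proof -
  assume "\<And>i. i < n \<Longrightarrow> \<alpha> i \<in> span S"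
  then have "\<alpha> ` {..<n} \<subseteq> span S" by auto
  then have "span (\<alpha> ` {..<n}) \<subseteq> span S" by (simp add: span_minimal)
  then show ?thesis using span_all by auto
qed

end



definition ind :: "nat \<Rightarrow> nat \<Rightarrow> nat \<Rightarrow> real" where
  "ind a b j = (if a \<le> j \<and> j < b then 1 else 0)"

locale rsA = rsc \<Phi> \<alpha> n "cartan_A n" for \<Phi> :: "'a::euclidean_space set" and \<alpha> n
begin

lemma pcA: assumes "i < n"
  shows "pc c i = 2 * c i - (if 0 < i then c (i - 1) else 0) - (if i + 1 < n then c (i + 1) else 0)"
proof -
  have "pc c i = (\<Sum>j<n. (if j = i then 2 * c j else 0) + (if j = i + 1 then - c j else 0)
       + (if 0 < i then (if j = i - 1 then - c j else 0) else 0))"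
    unfolding pc_def cartan_A_def by (intro sum.cong) auto
  also have "\<dots> = (\<Sum>j<n. if j = i then 2 * c j else 0) + (\<Sum>j<n. if j = i + 1 then - c j else 0)
       + (\<Sum>j<n. if 0 < i then (if j = i - 1 then - c j else 0) else 0)"
    by (simp add: sum.distrib)
  also have "\<dots> = 2 * c i - (if i + 1 < n then c (i + 1) else 0) - (if 0 < i then c (i - 1) else 0)"
    using assms by (auto simp: sum.delta')
  finally show ?thesis by simp
qed

lemma pcA_ind: assumes "a < b" "b \<le> n" "i < n"
  shows "pc (ind a b) i = (if i + 1 = a \<or> i = b then -1 else if a \<le> i \<and> i < b then
     2 - (if a < i then 1 else 0) - (if i + 1 < b then 1 else 0) else 0)"
  unfolding pcA[OF assms(3)] ind_def using assms by auto

definition PA :: "(nat \<Rightarrow> real) \<Rightarrow> bool" where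
  "PA c \<longleftrightarrow> (\<exists>a b. a < b \<and> b \<le> n \<and> (\<forall>j<n. c j = ind a b j))"

lemma stepA:
  assumes "PA c" "i < n" "pc c i < 0"
  shows "PA (\<lambda>j. c j - pc c i * (if j = i then 1 else 0))"
proof -
  obtain a b where ab: "a < b" "b \<le> n" "\<forall>j<n. c j = ind a b j" using assms(1) unfolding PA_def by blast
  have pc: "pc c i = pc (ind a b) i" using ab(3) by (intro pc_cong) auto
  have v: "pc c i = (if i + 1 = a \<or> i = b then -1 else if a \<le> i \<and> i < b then
     2 - (if a < i then 1 else 0) - (if i + 1 < b then 1 else 0) else 0)"
    using pc pcA_ind[OF ab(1,2) assms(2)] by simp
  show ?thesis
  proof (cases "i + 1 = a")
    case True
    then have "pc c i = -1" using v by simp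
    then show ?thesis unfolding PA_def using ab True
      by (intro exI[of _ i] exI[of _ b]) (auto simp: ind_def)
  next
    case F1: False
    show ?thesis
    proof (cases "i = b")
      case True
      then have "pc c i = -1" using v F1 by simp
      then show ?thesis unfolding PA_def using ab True assms(2)
        by (intro exI[of _ a] exI[of _ "b+1"]) (auto simp: ind_def)
    next
      case False
      then have "pc c i \<ge> 0" using v F1 by auto
      then show ?thesis using assms(3) by simp
    qed
  qed
qed

lemma posA_sub: "\<beta> \<in> pos_roots \<Phi> \<alpha> n \<Longrightarrow> PA (cf \<beta>)"
proof (rule generation)
  fix i assume i: "i < n"
  show "PA (cf (\<alpha> i))" unfolding PA_def
    by (intro exI[of _ i] exI[of _ "i+1"]) (use i in \<open>auto simp: cf_alpha ind_def\<close>)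
next
  fix \<beta> i assume b: "\<beta> \<in> pos_roots \<Phi> \<alpha> n" "PA (cf \<beta>)" "i < n" "pair \<beta> i < 0"
  have "PA (\<lambda>j. cf \<beta> j - pc (cf \<beta>) i * (if j = i then 1 else 0))"
    using stepA[OF b(2,3)] b(4) pair_pc[OF b(3)] by simp
  moreover have "cf (\<beta> - pair \<beta> i *\<^sub>R \<alpha> i) = (\<lambda>j. cf \<beta> j - pc (cf \<beta>) i * (if j = i then 1 else 0))"
  proof (rule ext)
    fix j show "cf (\<beta> - pair \<beta> i *\<^sub>R \<alpha> i) j = cf \<beta> j - pc (cf \<beta>) i * (if j = i then 1 else 0)"
    proof (cases "j < n")
      case True then show ?thesis using b(3) by (simp add: cf_linear cf_alpha pair_pc)
    next
      case False then show ?thesis using b(3) by (simp add: cf_def omega_ge)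
    qed
  qed
  ultimately show "PA (cf (\<beta> - pair \<beta> i *\<^sub>R \<alpha> i))" by simp
qed

lemma existsA: assumes "a < b" "b \<le> n" shows "vec (ind a b) \<in> \<Phi>"
  using assms
proof (induction b)
  case 0 then show ?case by simp
next
  case (Suc b)
  show ?case
  proof (cases "a = b")
    case True
    then have "vec (ind a (Suc b)) = \<alpha> a" using Suc by (intro vec_alpha) (auto simp: ind_def)
    then show ?thesis using alpha_in Suc True by simp
  next
    case False
    then have ab: "a < b" "b < n" using Suc by auto
    have r: "vec (ind a b) \<in> \<Phi>" using Suc ab by simp
    have "pc (ind a b) b = - 1" using pcA_ind[OF ab(1) _ ab(2)] ab by simp
    then have "vec (\<lambda>j. ind a b j + (if j = b then 1 else 0)) \<in> \<Phi>"
      using exists_step[OF r ab(2), of 1] by simp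
    moreover have "vec (\<lambda>j. ind a b j + (if j = b then 1 else 0)) = vec (ind a (Suc b))"
      using ab by (intro vec_eq) (auto simp: ind_def)
    ultimately show ?thesis by simp
  qed
qed

lemma cf_ind: "j < n \<Longrightarrow> cf (vec (ind a b)) j = ind a b j" by (rule cf_vec)

lemma posA: "\<beta> \<in> pos_roots \<Phi> \<alpha> n \<longleftrightarrow> (\<exists>a b. a < b \<and> b \<le> n \<and> \<beta> = vec (ind a b))"
proof
  assume "\<beta> \<in> pos_roots \<Phi> \<alpha> n"
  then obtain a b where "a < b" "b \<le> n" "\<forall>j<n. cf \<beta> j = ind a b j" using posA_sub PA_def by blast
  then show "\<exists>a b. a < b \<and> b \<le> n \<and> \<beta> = vec (ind a b)" using vec_cf[of \<beta>] vec_eq[of "cf \<beta>" "ind a b"] by metis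
next
  assume "\<exists>a b. a < b \<and> b \<le> n \<and> \<beta> = vec (ind a b)"
  then obtain a b where ab: "a < b" "b \<le> n" "\<beta> = vec (ind a b)" by blast
  then show "\<beta> \<in> pos_roots \<Phi> \<alpha> n" using existsA pos_iff cf_ind by (auto simp: ind_def)
qed

lemma posA_E: assumes "\<beta> \<in> pos_roots \<Phi> \<alpha> n"
  obtains a b where "a < b" "b \<le> n" "\<beta> = vec (ind a b)"
  using assms by (simp only: posA) blast

lemma nA: "0 < n" using N by simp

lemma thetaA: "highest_root \<Phi> \<alpha> n = vec (ind 0 n)"
proof (rule highest_eq)
  show "vec (ind 0 n) \<in> pos_roots \<Phi> \<alpha> n" using posA nA by blast
  fix \<beta> assume "\<beta> \<in> pos_roots \<Phi> \<alpha> n"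
  then obtain a b where ab: "a < b" "b \<le> n" "\<beta> = vec (ind a b)" using posA by blast
  show "root_le \<alpha> n \<beta> (vec (ind 0 n))" unfolding root_le_iff ab(3)
    by (auto simp: cf_ind ind_def)
qed

lemma boundA: "\<beta> \<in> \<Phi> \<Longrightarrow> cf \<beta> i \<le> 1"
proof -
  assume b: "\<beta> \<in> \<Phi>"
  show ?thesis
  proof (cases "i < n")
    case False then show ?thesis by (simp add: cf_def omega_ge)
  next
    case i: True
    from roots_split[OF b] show ?thesis
    proof
      assume "\<beta> \<in> pos_roots \<Phi> \<alpha> n"
      then obtain a b where "\<beta> = vec (ind a b)" using posA by blast
      then show ?thesis using i by (simp add: cf_ind ind_def)
    next
      assume "- \<beta> \<in> pos_roots \<Phi> \<alpha> n"
      then show ?thesis using i pos_iff by (auto simp: cf_linear)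
    qed
  qed
qed

definition IA where "IA i = {\<beta> \<in> pos_roots \<Phi> \<alpha> n. cf \<beta> i = 1}"

lemma faceA: "i < n \<Longrightarrow> std_parabolic_face \<Phi> \<alpha> n i = convex hull (IA i)"
  unfolding std_parabolic_face_def IA_def thetaA
  by (simp add: cf_def[symmetric] \<omega>_def[symmetric] cf_ind ind_def)

lemma IA_eq: "IA i = {vec (ind a b) | a b. a \<le> i \<and> i < b \<and> b \<le> n}" if i: "i < n"
proof -
  have "\<beta> \<in> IA i \<longleftrightarrow> (\<exists>a b. \<beta> = vec (ind a b) \<and> a \<le> i \<and> i < b \<and> b \<le> n)" for \<beta>
  proof
    assume "\<beta> \<in> IA i"
    then obtain a b where ab: "a < b" "b \<le> n" "\<beta> = vec (ind a b)" "cf \<beta> i = 1"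
      unfolding IA_def using posA by blast
    then have "a \<le> i \<and> i < b" using i cf_ind[OF i, of a b] by (auto simp: ind_def split: if_splits)
    then show "\<exists>a b. \<beta> = vec (ind a b) \<and> a \<le> i \<and> i < b \<and> b \<le> n" using ab by blast
  next
    assume "\<exists>a b. \<beta> = vec (ind a b) \<and> a \<le> i \<and> i < b \<and> b \<le> n"
    then obtain a b where ab: "\<beta> = vec (ind a b)" "a \<le> i" "i < b" "b \<le> n" by blast
    then have "a < b" by simp
    then have "\<beta> \<in> pos_roots \<Phi> \<alpha> n" using posA ab by blast
    moreover have "cf \<beta> i = 1" using ab cf_ind[OF i, of a b] by (simp add: ind_def)
    ultimately show "\<beta> \<in> IA i" unfolding IA_def by simp
  qed
  then show ?thesis by blast
qed

lemma affA: assumes i: "i < n" shows "aff_dim (std_parabolic_face \<Phi> \<alpha> n i) = int n - 1"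
proof -
  have "aff_dim (IA i) = int n - 1"
  proof (rule aff_dim_full)
    show "IA i \<subseteq> {x. \<omega> i \<bullet> x = 1}" unfolding IA_def by (auto simp: cf_def inner_commute)
    show "(1::real) \<noteq> 0" by simp
    show "span (IA i) = UNIV"
    proof (rule span_univ)
      fix j assume j: "j < n"
      have mem: "vec (ind a b) \<in> span (IA i)" if "a \<le> i" "i < b" "b \<le> n" for a b
        using that IA_eq[OF i] by (auto intro: span_base)
      consider "j = i" | "j < i" | "i < j" by linarith
      then show "\<alpha> j \<in> span (IA i)"
      proof cases
        case 1
        have "\<alpha> j = vec (ind i (i+1))" using j 1 by (intro vec_alpha[symmetric]) (auto simp: ind_def)
        then show ?thesis using mem[of i "i+1"] i by simp
      next
        case 2
        have "\<alpha> j = vec (ind j (i+1)) - vec (ind (j+1) (i+1))" unfolding vec_diff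
          using j 2 by (intro vec_alpha[symmetric]) (auto simp: ind_def)
        then show ?thesis using mem[of j "i+1"] mem[of "j+1" "i+1"] i 2 by (simp add: span_diff)
      next
        case 3
        have "\<alpha> j = vec (ind i (j+1)) - vec (ind i j)" unfolding vec_diff
          using j 3 by (intro vec_alpha[symmetric]) (auto simp: ind_def)
        then show ?thesis using mem[of i "j+1"] mem[of i j] j 3 by (simp add: span_diff)
      qed
    qed
  qed
  then show ?thesis using faceA[OF i] by (simp add: aff_dim_convex_hull)
qed

lemma faceofA: "i < n \<Longrightarrow> std_parabolic_face \<Phi> \<alpha> n i face_of convex hull \<Phi>"
  unfolding faceA IA_def using face_lemma[of i 1] boundA by simp

lemma abelA: "abelian_ideal \<Phi> \<alpha> n (IA i)"
  unfolding IA_def using abelian_level[of i 1] boundA by simp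

lemma alphaIA: "i < n \<Longrightarrow> \<alpha> i \<in> IA i"
  unfolding IA_def using alpha_in pos_iff cf_alpha by auto

lemma abel_sub:
  assumes J: "abelian_ideal \<Phi> \<alpha> n J" and ne: "J \<noteq> {}"
  shows "\<exists>i<n. J \<subseteq> IA i"
proof -
  have Jpos: "J \<subseteq> pos_roots \<Phi> \<alpha> n" using J unfolding abelian_ideal_def by auto
  have up: "\<And>\<beta> \<gamma>. \<beta> \<in> J \<Longrightarrow> \<gamma> \<in> pos_roots \<Phi> \<alpha> n \<Longrightarrow> root_le \<alpha> n \<beta> \<gamma> \<Longrightarrow> \<gamma> \<in> J"
    using J unfolding abelian_ideal_def by auto
  have ab: "\<And>\<beta> \<gamma>. \<beta> \<in> J \<Longrightarrow> \<gamma> \<in> J \<Longrightarrow> \<beta> + \<gamma> \<notin> \<Phi>"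
    using J unfolding abelian_ideal_def by auto
  define A where "A = {a. \<exists>b. a < b \<and> b \<le> n \<and> vec (ind a b) \<in> J}"
  define Bs where "Bs = {b. \<exists>a. a < b \<and> b \<le> n \<and> vec (ind a b) \<in> J}"
  obtain \<beta>0 where b0J: "\<beta>0 \<in> J" using ne by blast
  then have "\<beta>0 \<in> pos_roots \<Phi> \<alpha> n" using Jpos by blast
  then obtain a0 b0 where ab0: "a0 < b0" "b0 \<le> n" "\<beta>0 = vec (ind a0 b0)" by (rule posA_E)
  then have ab0: "a0 < b0" "b0 \<le> n" "vec (ind a0 b0) \<in> J" using b0J by auto
  have finA: "finite A" unfolding A_def by (rule finite_subset[of _ "{..n}"]) auto
  have finB: "finite Bs" unfolding Bs_def by (rule finite_subset[of _ "{..n}"]) auto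
  have neA: "A \<noteq> {}" and neB: "Bs \<noteq> {}" using ab0 unfolding A_def Bs_def by blast+
  define as where "as = Max A"
  define bs where "bs = Min Bs"
  have "as \<in> A" using Max_in[OF finA neA] as_def by simp
  then obtain b1 where b1: "as < b1" "b1 \<le> n" "vec (ind as b1) \<in> J"
    unfolding A_def by blast
  have "bs \<in> Bs" using Min_in[OF finB neB] bs_def by simp
  then obtain a2 where a2: "a2 < bs" "bs \<le> n" "vec (ind a2 bs) \<in> J"
    unfolding Bs_def by blast
  have leA: "a \<le> as" and geB: "bs \<le> b" if "a < b" "b \<le> n" "vec (ind a b) \<in> J" for a b
  proof -
    have "a \<in> A" "b \<in> Bs" using that unfolding A_def Bs_def by blast+
    then show "a \<le> as" "bs \<le> b" using Max_ge[OF finA] Min_le[OF finB] as_def bs_def by auto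
  qed
  show ?thesis
  proof (cases "as < bs")
    case True
    have "J \<subseteq> IA as"
    proof
      fix \<beta> assume "\<beta> \<in> J"
      then have "\<beta> \<in> pos_roots \<Phi> \<alpha> n" using Jpos by blast
      then obtain a b where ab: "a < b" "b \<le> n" "\<beta> = vec (ind a b)" by (rule posA_E)
      then have "a \<le> as" "bs \<le> b" using leA geB \<open>\<beta> \<in> J\<close> by auto
      then show "\<beta> \<in> IA as" unfolding IA_def using ab True b1 \<open>\<beta> \<in> J\<close> Jpos
        by (auto simp: cf_ind ind_def)
    qed
    moreover have "as < n" using b1 by simp
    ultimately show ?thesis by blast
  next
    case False
    have "a2 < as" "as \<le> n" using False b1 a2 by auto
    then have g: "vec (ind a2 as) \<in> pos_roots \<Phi> \<alpha> n" using posA by blast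
    have "root_le \<alpha> n (vec (ind a2 bs)) (vec (ind a2 as))" unfolding root_le_iff
      using False b1 by (auto simp: cf_ind ind_def)
    then have "vec (ind a2 as) \<in> J" using up[OF a2(3) g] by simp
    moreover have "vec (ind a2 as) + vec (ind as b1) = vec (ind a2 b1)"
      unfolding vec_add using False a2 b1 by (intro vec_eq) (auto simp: ind_def)
    moreover have "vec (ind a2 b1) \<in> \<Phi>" using existsA a2 b1 False by simp
    ultimately have False using ab[OF _ b1(3)] by metis
    then show ?thesis by blast
  qed
qed

lemma maxA_IA: "i < n \<Longrightarrow> max_abelian_ideal \<Phi> \<alpha> n (IA i)"
  unfolding max_abelian_ideal_def
proof (intro conjI allI impI abelA)
  fix J assume i: "i < n" and J: "abelian_ideal \<Phi> \<alpha> n J \<and> IA i \<subseteq> J"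
  then have "J \<noteq> {}" using alphaIA by auto
  then obtain k where k: "k < n" "J \<subseteq> IA k" using abel_sub J by blast
  then have "\<alpha> i \<in> IA k" using alphaIA[OF i] J by auto
  then have "k = i" unfolding IA_def using cf_alpha[OF i k(1)] by (auto split: if_splits)
  then show "J = IA i" using k J by auto
qed

lemma maxA_is: "max_abelian_ideal \<Phi> \<alpha> n I \<Longrightarrow> \<exists>i<n. I = IA i"
proof -
  assume m: "max_abelian_ideal \<Phi> \<alpha> n I"
  have "I \<noteq> {}"
  proof
    assume "I = {}"
    then have "IA 0 = I" using m abelA unfolding max_abelian_ideal_def by blast
    then show False using alphaIA[OF nA] \<open>I = {}\<close> by auto
  qed
  then obtain i where i: "i < n" "I \<subseteq> IA i" using abel_sub m unfolding max_abelian_ideal_def by blast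
  then show ?thesis using m abelA unfolding max_abelian_ideal_def by metis
qed

theorem mainA:
  "{std_parabolic_face \<Phi> \<alpha> n i | i. i < n \<and>
            std_parabolic_face \<Phi> \<alpha> n i face_of convex hull \<Phi> \<and>
            aff_dim (std_parabolic_face \<Phi> \<alpha> n i) = int n - 1}
         = {convex hull I | I. max_abelian_ideal \<Phi> \<alpha> n I}"
proof -
  have "{std_parabolic_face \<Phi> \<alpha> n i | i. i < n \<and>
            std_parabolic_face \<Phi> \<alpha> n i face_of convex hull \<Phi> \<and>
            aff_dim (std_parabolic_face \<Phi> \<alpha> n i) = int n - 1} = {convex hull (IA i) | i. i < n}"
  proof (intro equalityI subsetI)
    fix x assume "x \<in> {std_parabolic_face \<Phi> \<alpha> n i | i. i < n \<and>
            std_parabolic_face \<Phi> \<alpha> n i face_of convex hull \<Phi> \<and>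
            aff_dim (std_parabolic_face \<Phi> \<alpha> n i) = int n - 1}"
    then obtain i where "i < n" "x = std_parabolic_face \<Phi> \<alpha> n i" by blast
    then show "x \<in> {convex hull (IA i) | i. i < n}" using faceA by blast
  next
    fix x assume "x \<in> {convex hull (IA i) | i. i < n}"
    then obtain i where i: "i < n" "x = convex hull (IA i)" by blast
    then have "x = std_parabolic_face \<Phi> \<alpha> n i" using faceA by simp
    then show "x \<in> {std_parabolic_face \<Phi> \<alpha> n i | i. i < n \<and>
            std_parabolic_face \<Phi> \<alpha> n i face_of convex hull \<Phi> \<and>
            aff_dim (std_parabolic_face \<Phi> \<alpha> n i) = int n - 1}" using i faceofA affA by blast
  qed
  also have "\<dots> = {convex hull I | I. max_abelian_ideal \<Phi> \<alpha> n I}"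
    using maxA_IA maxA_is by blast
  finally show ?thesis .
qed

end



definition gC :: "nat \<Rightarrow> nat \<Rightarrow> nat \<Rightarrow> nat \<Rightarrow> real" where
  "gC m a b j = ind a b j + 2 * ind b m j + (if j = m then 1 else 0)"

definition pcCf :: "nat \<Rightarrow> (nat \<Rightarrow> real) \<Rightarrow> nat \<Rightarrow> real" where
  "pcCf m c i = 2 * c i - (if 0 < i then c (i - 1) else 0) - (if i < m then (if i + 1 = m then 2 else 1) * c (i + 1) else 0)"

lemma pcCf_ind: "a < b \<Longrightarrow> b \<le> m \<Longrightarrow> i \<le> m \<Longrightarrow> pcCf m (ind a b) i = (if i + 1 = a \<or> i = b then -1 else if a \<le> i \<and> i < b then
     2 - (if a < i then 1 else 0) - (if i + 1 < b then 1 else 0) else 0)"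
  unfolding pcCf_def ind_def by auto

lemma pcCf_g: "a \<le> b \<Longrightarrow> b \<le> m \<Longrightarrow> i \<le> m \<Longrightarrow> pcCf m (gC m a b) i < 0 \<Longrightarrow>
   (i + 1 = a \<and> pcCf m (gC m a b) i = (if a < b then -1 else -2)) \<or> (a < i \<and> i + 1 = b \<and> pcCf m (gC m a b) i = -1)"
  unfolding pcCf_def gC_def ind_def by (auto split: if_splits)

lemma cC: assumes "n \<ge> 2" shows "c * cartan_C n j i = (if j = i then 2*c else 0) + (if j = i+1 then -((if i+1 = n-1 then 2 else 1)*c) else 0) + (if 0<i then (if j = i-1 then -c else 0) else 0)"
proof (cases "j = i")
  case True then show ?thesis by (auto simp add: cartan_C_def)
next
  case F1: False
  show ?thesis
  proof (cases "j = i + 1")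
    case True
    have c: "cartan_C n j i = (if i + 1 = n - 1 then -2 else -1)"
    proof (cases "i + 1 = n - 1")
      case T2: True
      then have "j = n - 1" "i = n - 2" using True assms by auto
      then show ?thesis using T2 F1 by (simp add: cartan_C_def)
    next
      case F3: False
      then have "\<not> (j = n - 1 \<and> i = n - 2)" using True assms by auto
      then show ?thesis using F3 F1 True by (simp add: cartan_C_def)
    qed
    have "j \<noteq> i - 1" using True by auto
    then show ?thesis using c True by simp
  next
    case F2: False
    show ?thesis
    proof (cases "0 < i \<and> j = i - 1")
      case True
      then have h: "\<not> (j = n - 1 \<and> i = n - 2)" "i = j + 1" by auto
      have c: "cartan_C n j i = -1" unfolding cartan_C_def using F1 h by simp
      show ?thesis using c F1 F2 True by simp
    next
      case False
      then have h: "i \<noteq> j + 1" by auto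
      have h2: "\<not> (j = n - 1 \<and> i = n - 2)" using F2 assms by auto
      have c: "cartan_C n j i = 0" unfolding cartan_C_def using F1 F2 h h2 by simp
      show ?thesis using c F1 F2 False by auto
    qed
  qed
qed

locale rsC = rsc \<Phi> \<alpha> n "cartan_C n" for \<Phi> :: "'a::euclidean_space set" and \<alpha> n +
  assumes n2: "n \<ge> 2"
begin

definition m where "m = n - 1"
lemma m: "m < n" "n = Suc m" "1 \<le> m" using n2 unfolding m_def by auto
lemma lt_n: "i < n \<longleftrightarrow> i \<le> m" using n2 unfolding m_def by auto

lemma pcC: assumes "i < n" shows "pc c i = pcCf m c i"
proof -
  have "pc c i = (\<Sum>j<n. (if j = i then 2 * c j else 0) + (if j = i + 1 then - ((if i + 1 = m then 2 else 1) * c j) else 0)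
       + (if 0 < i then (if j = i - 1 then - c j else 0) else 0))"
    unfolding pc_def
  proof (intro sum.cong refl)
    fix j assume "j \<in> {..<n}"
    show "c j * cartan_C n j i = (if j = i then 2 * c j else 0) + (if j = i + 1 then - ((if i + 1 = m then 2 else 1) * c j) else 0)
       + (if 0 < i then (if j = i - 1 then - c j else 0) else 0)"
      unfolding m_def by (rule cC[OF n2])
  qed
  also have "\<dots> = (\<Sum>j<n. if j = i then 2 * c j else 0) + (\<Sum>j<n. if j = i + 1 then - ((if i + 1 = m then 2 else 1) * c j) else 0)
       + (\<Sum>j<n. if 0 < i then (if j = i - 1 then - c j else 0) else 0)"
    by (simp add: sum.distrib)
  also have "\<dots> = pcCf m c i"
    unfolding pcCf_def using assms m(1,2) by (auto simp: sum.delta')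
  finally show ?thesis .
qed

definition PC :: "(nat \<Rightarrow> real) \<Rightarrow> bool" where
  "PC c \<longleftrightarrow> (\<exists>a b. a < b \<and> b \<le> m \<and> (\<forall>j<n. c j = ind a b j)) \<or>
             (\<exists>a b. a \<le> b \<and> b \<le> m \<and> (\<forall>j<n. c j = gC m a b j))"

lemma stepC:
  assumes "PC c" "i < n" "pc c i < 0"
  shows "PC (\<lambda>j. c j - pc c i * (if j = i then 1 else 0))"
  using assms(1)[unfolded PC_def]
proof (elim disjE exE conjE)
  fix a b assume ab: "a < b" "b \<le> m" "\<forall>j<n. c j = ind a b j"
  have "pc c i = pc (ind a b) i" using ab(3) by (intro pc_cong) auto
  then have v: "pc c i = (if i + 1 = a \<or> i = b then -1 else if a \<le> i \<and> i < b then
     2 - (if a < i then 1 else 0) - (if i + 1 < b then 1 else 0) else 0)"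
    using pcC[OF assms(2)] pcCf_ind[OF ab(1,2)] assms(2) m by simp
  show ?thesis
  proof (cases "i + 1 = a")
    case True
    then have "pc c i = -1" using v by simp
    then show ?thesis using ab True
      unfolding PC_def by (intro disjI1 exI[of _ i] exI[of _ b]) (auto simp: ind_def)
  next
    case F1: False
    show ?thesis
    proof (cases "i = b")
      case True
      then have p: "pc c i = -1" using v F1 by simp
      show ?thesis
      proof (cases "b < m")
        case True
        then show ?thesis using ab p \<open>i = b\<close>
          unfolding PC_def by (intro disjI1 exI[of _ a] exI[of _ "b+1"]) (auto simp: ind_def)
      next
        case False
        then have "b = m" using ab by simp
        then show ?thesis using ab p \<open>i = b\<close>
          unfolding PC_def by (intro disjI2 exI[of _ a] exI[of _ m]) (auto simp: ind_def gC_def)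
      qed
    next
      case False
      then have "pc c i \<ge> 0" using v F1 by auto
      then show ?thesis using assms(3) by simp
    qed
  qed
next
  fix a b assume ab: "a \<le> b" "b \<le> m" "\<forall>j<n. c j = gC m a b j"
  have "pc c i = pc (gC m a b) i" using ab(3) by (intro pc_cong) auto
  then have pe: "pc c i = pcCf m (gC m a b) i" using pcC[OF assms(2)] by simp
  then have "pcCf m (gC m a b) i < 0" using assms(3) by simp
  from pcCf_g[OF ab(1,2) _ this] assms(2) m
  have cs: "(i + 1 = a \<and> pc c i = (if a < b then -1 else -2)) \<or> (a < i \<and> i + 1 = b \<and> pc c i = -1)"
    using pe by auto
  then show ?thesis
  proof (elim disjE conjE)
    assume h: "i + 1 = a" "pc c i = (if a < b then -1 else -2)"
    show ?thesis
    proof (cases "a < b")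
      case True
      then show ?thesis using ab h unfolding PC_def by (intro disjI2 exI[of _ i] exI[of _ b]) (auto simp: ind_def gC_def)
    next
      case False
      then show ?thesis using ab h unfolding PC_def by (intro disjI2 exI[of _ i] exI[of _ i]) (auto simp: ind_def gC_def)
    qed
  next
    assume h: "a < i" "i + 1 = b" "pc c i = -1"
    then show ?thesis using ab unfolding PC_def by (intro disjI2 exI[of _ a] exI[of _ i]) (auto simp: ind_def gC_def)
  qed
qed

lemma cf_ext: "i < n \<Longrightarrow> cf (\<beta> - pair \<beta> i *\<^sub>R \<alpha> i) = (\<lambda>j. cf \<beta> j - pc (cf \<beta>) i * (if j = i then 1 else 0))"
proof (rule ext)
  fix j assume i: "i < n"
  show "cf (\<beta> - pair \<beta> i *\<^sub>R \<alpha> i) j = cf \<beta> j - pc (cf \<beta>) i * (if j = i then 1 else 0)"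
  proof (cases "j < n")
    case True then show ?thesis using i by (simp add: cf_linear cf_alpha pair_pc)
  next
    case False then show ?thesis using i by (simp add: cf_def omega_ge)
  qed
qed

lemma posC_sub: "\<beta> \<in> pos_roots \<Phi> \<alpha> n \<Longrightarrow> PC (cf \<beta>)"
proof (rule generation)
  fix i assume i: "i < n"
  show "PC (cf (\<alpha> i))"
  proof (cases "i < m")
    case True
    then show ?thesis unfolding PC_def
      by (intro disjI1 exI[of _ i] exI[of _ "i+1"]) (use i in \<open>auto simp: cf_alpha ind_def\<close>)
  next
    case False
    then have "i = m" using i m by simp
    then show ?thesis unfolding PC_def
      by (intro disjI2 exI[of _ m] exI[of _ m]) (use i in \<open>auto simp: cf_alpha ind_def gC_def\<close>)
  qed
next
  fix \<beta> i assume b: "\<beta> \<in> pos_roots \<Phi> \<alpha> n" "PC (cf \<beta>)" "i < n" "pair \<beta> i < 0"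
  have "PC (\<lambda>j. cf \<beta> j - pc (cf \<beta>) i * (if j = i then 1 else 0))"
    using stepC[OF b(2,3)] b(4) pair_pc[OF b(3)] by simp
  then show "PC (cf (\<beta> - pair \<beta> i *\<^sub>R \<alpha> i))" using cf_ext[OF b(3)] by simp
qed

lemma exists_ind: assumes "a < b" "b \<le> m" shows "vec (ind a b) \<in> \<Phi>"
  using assms
proof (induction b)
  case 0 then show ?case by simp
next
  case (Suc b)
  show ?case
  proof (cases "a = b")
    case True
    then have "vec (ind a (Suc b)) = \<alpha> a" using Suc m by (intro vec_alpha) (auto simp: ind_def)
    then show ?thesis using alpha_in Suc True m by simp
  next
    case False
    then have ab: "a < b" "b < m" using Suc by auto
    have r: "vec (ind a b) \<in> \<Phi>" using Suc ab by simp
    have "pc (ind a b) b = - 1" using pcC[of b] pcCf_ind[OF ab(1), of m b] ab m by simp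
    then have "vec (\<lambda>j. ind a b j + (if j = b then 1 else 0)) \<in> \<Phi>"
      using exists_step[OF r, of b 1] ab m by simp
    moreover have "vec (\<lambda>j. ind a b j + (if j = b then 1 else 0)) = vec (ind a (Suc b))"
      using ab by (intro vec_eq) (auto simp: ind_def)
    ultimately show ?thesis by simp
  qed
qed

lemma pcCf_gval: "pcCf m (gC m a b) i = pcCf m (gC m a b) i" ..

lemma exists_gm: assumes "a \<le> m" shows "vec (gC m a m) \<in> \<Phi>"
proof (cases "a = m")
  case True
  have "vec (gC m a m) = \<alpha> m" using True m by (intro vec_alpha) (auto simp: ind_def gC_def)
  then show ?thesis using alpha_in m by simp
next
  case False
  then have a: "a < m" using assms by simp
  have r: "vec (ind a m) \<in> \<Phi>" using exists_ind[OF a] by simp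
  have "pc (ind a m) m = - 1" using pcC[of m] pcCf_ind[OF a, of m m] m by simp
  then have "vec (\<lambda>j. ind a m j + (if j = m then 1 else 0)) \<in> \<Phi>"
    using exists_step[OF r, of m 1] m by simp
  moreover have "vec (\<lambda>j. ind a m j + (if j = m then 1 else 0)) = vec (gC m a m)"
    by (intro vec_eq) (auto simp: ind_def gC_def)
  ultimately show ?thesis by simp
qed

lemma exists_gaa: "k \<le> m \<Longrightarrow> vec (gC m (m - k) (m - k)) \<in> \<Phi>"
proof (induction k)
  case 0 then show ?case using exists_gm by simp
next
  case (Suc k)
  define a where "a = m - Suc k"
  have a: "a + 1 = m - k" "a < m" using Suc unfolding a_def by auto
  have r: "vec (gC m (a+1) (a+1)) \<in> \<Phi>" using Suc a by simp
  have "pc (gC m (a+1) (a+1)) a = pcCf m (gC m (a+1) (a+1)) a" using pcC[of a] a m by simp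
  also have "\<dots> = -2" unfolding pcCf_def gC_def ind_def using a by auto
  finally have "vec (\<lambda>j. gC m (a+1) (a+1) j + (if j = a then 2 else 0)) \<in> \<Phi>"
    using exists_step[OF r, of a 2] a m by simp
  moreover have "vec (\<lambda>j. gC m (a+1) (a+1) j + (if j = a then 2 else 0)) = vec (gC m a a)"
    using a by (intro vec_eq) (auto simp: ind_def gC_def)
  ultimately show ?case unfolding a_def by simp
qed

lemma exists_gab: "a < m - k \<Longrightarrow> vec (gC m a (m - k)) \<in> \<Phi>"
proof (induction k)
  case 0 then show ?case using exists_gm by simp
next
  case (Suc k)
  define b where "b = m - Suc k"
  have b: "b + 1 = m - k" "b < m" "a < b" using Suc unfolding b_def by auto
  have r: "vec (gC m a (b+1)) \<in> \<Phi>" using Suc b by simp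
  have "pc (gC m a (b+1)) b = pcCf m (gC m a (b+1)) b" using pcC[of b] b m by simp
  also have "\<dots> = -1" unfolding pcCf_def gC_def ind_def using b by auto
  finally have "vec (\<lambda>j. gC m a (b+1) j + (if j = b then 1 else 0)) \<in> \<Phi>"
    using exists_step[OF r, of b 1] b m by simp
  moreover have "vec (\<lambda>j. gC m a (b+1) j + (if j = b then 1 else 0)) = vec (gC m a b)"
    using b by (intro vec_eq) (auto simp: ind_def gC_def)
  ultimately show ?case unfolding b_def by simp
qed

lemma exists_g: assumes "a \<le> b" "b \<le> m" shows "vec (gC m a b) \<in> \<Phi>"
proof (cases "a = b")
  case True
  then show ?thesis using exists_gaa[of "m - a"] assms by simp
next
  case False
  then show ?thesis using exists_gab[of a "m - b"] assms by simp
qed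

end



context rsC begin

lemma cf_indC: "j < n \<Longrightarrow> cf (vec (ind a b)) j = ind a b j" by (rule cf_vec)
lemma cf_g: "j < n \<Longrightarrow> cf (vec (gC m a b)) j = gC m a b j" by (rule cf_vec)

lemma posC: "\<beta> \<in> pos_roots \<Phi> \<alpha> n \<longleftrightarrow>
   (\<exists>a b. a < b \<and> b \<le> m \<and> \<beta> = vec (ind a b)) \<or> (\<exists>a b. a \<le> b \<and> b \<le> m \<and> \<beta> = vec (gC m a b))"
proof
  assume "\<beta> \<in> pos_roots \<Phi> \<alpha> n"
  then have "PC (cf \<beta>)" by (rule posC_sub)
  then show "(\<exists>a b. a < b \<and> b \<le> m \<and> \<beta> = vec (ind a b)) \<or> (\<exists>a b. a \<le> b \<and> b \<le> m \<and> \<beta> = vec (gC m a b))"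
    unfolding PC_def using vec_cf[of \<beta>] vec_eq by metis
next
  assume "(\<exists>a b. a < b \<and> b \<le> m \<and> \<beta> = vec (ind a b)) \<or> (\<exists>a b. a \<le> b \<and> b \<le> m \<and> \<beta> = vec (gC m a b))"
  then show "\<beta> \<in> pos_roots \<Phi> \<alpha> n"
  proof (elim disjE exE conjE)
    fix a b assume ab: "a < b" "b \<le> m" "\<beta> = vec (ind a b)"
    show ?thesis unfolding pos_iff using exists_ind[OF ab(1,2)] ab cf_indC by (auto simp: ind_def)
  next
    fix a b assume ab: "a \<le> b" "b \<le> m" "\<beta> = vec (gC m a b)"
    show ?thesis unfolding pos_iff using exists_g[OF ab(1,2)] ab cf_g by (auto simp: ind_def gC_def)
  qed
qed

lemma posC_E:
  assumes "\<beta> \<in> pos_roots \<Phi> \<alpha> n"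
  obtains (I) a b where "a < b" "b \<le> m" "\<beta> = vec (ind a b)"
    | (G) a b where "a \<le> b" "b \<le> m" "\<beta> = vec (gC m a b)"
  using assms by (simp only: posC) blast

lemma thetaC: "highest_root \<Phi> \<alpha> n = vec (gC m 0 0)"
proof (rule highest_eq)
  show "vec (gC m 0 0) \<in> pos_roots \<Phi> \<alpha> n" unfolding posC by blast
  fix \<beta> assume "\<beta> \<in> pos_roots \<Phi> \<alpha> n"
  then show "root_le \<alpha> n \<beta> (vec (gC m 0 0))"
  proof (cases rule: posC_E)
    case (I a b)
    show ?thesis unfolding root_le_iff I(3) using I m(1,2)
      by (auto simp: cf_indC cf_g ind_def gC_def)
  next
    case (G a b)
    show ?thesis unfolding root_le_iff G(3) using G m(1,2)
      by (auto simp: cf_g ind_def gC_def)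
  qed
qed

lemma boundC: "\<beta> \<in> \<Phi> \<Longrightarrow> cf \<beta> i \<le> (if i = m then 1 else 2)"
proof -
  assume b: "\<beta> \<in> \<Phi>"
  show ?thesis
  proof (cases "i < n")
    case False then show ?thesis by (simp add: cf_def omega_ge)
  next
    case i: True
    from roots_split[OF b] show ?thesis
    proof
      assume "\<beta> \<in> pos_roots \<Phi> \<alpha> n"
      then show ?thesis
      proof (cases rule: posC_E)
        case (I a b) then show ?thesis using i by (simp add: cf_indC ind_def)
      next
        case (G a b) then show ?thesis using i by (simp add: cf_g ind_def gC_def)
      qed
    next
      assume "- \<beta> \<in> pos_roots \<Phi> \<alpha> n"
      then show ?thesis using i pos_iff by (auto simp: cf_linear)
    qed
  qed
qed

lemma boundCm: "\<beta> \<in> \<Phi> \<Longrightarrow> cf \<beta> m \<le> 1" using boundC[of \<beta> m] by simp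
lemma boundCi: "\<beta> \<in> \<Phi> \<Longrightarrow> i \<noteq> m \<Longrightarrow> cf \<beta> i \<le> 2" using boundC[of \<beta> i] by simp

definition Istar where "Istar = {\<beta> \<in> pos_roots \<Phi> \<alpha> n. cf \<beta> m = 1}"

lemma faceC: "i < n \<Longrightarrow> std_parabolic_face \<Phi> \<alpha> n i = convex hull {\<beta> \<in> pos_roots \<Phi> \<alpha> n. cf \<beta> i = (if i = m then 1 else 2)}"
proof -
  assume i: "i < n"
  have "cf (vec (gC m 0 0)) i = (if i = m then 1 else 2)" using i m(2) by (auto simp: cf_g ind_def gC_def)
  then show ?thesis unfolding std_parabolic_face_def thetaC
    by (simp add: cf_def[symmetric] \<omega>_def[symmetric])
qed

lemma faceCm: "std_parabolic_face \<Phi> \<alpha> n m = convex hull Istar"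
  using faceC[OF m(1)] unfolding Istar_def by simp

lemma faceofCm: "std_parabolic_face \<Phi> \<alpha> n m face_of convex hull \<Phi>"
  unfolding faceCm Istar_def using face_lemma[of m 1] boundCm by simp

lemma affCm: "aff_dim (std_parabolic_face \<Phi> \<alpha> n m) = int n - 1"
proof -
  have "aff_dim Istar = int n - 1"
  proof (rule aff_dim_full)
    show "Istar \<subseteq> {x. \<omega> m \<bullet> x = 1}" unfolding Istar_def by (auto simp: cf_def inner_commute)
    show "(1::real) \<noteq> 0" by simp
    show "span Istar = UNIV"
    proof (rule span_univ)
      fix j assume j: "j < n"
      have mem: "vec (gC m a m) \<in> span Istar" if "a \<le> m" for a
      proof -
        have "vec (gC m a m) \<in> Istar" unfolding Istar_def posC using that m(1)
          by (auto simp: cf_g gC_def ind_def)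
        then show ?thesis by (rule span_base)
      qed
      show "\<alpha> j \<in> span Istar"
      proof (cases "j = m")
        case True
        have "\<alpha> j = vec (gC m m m)" using j True by (intro vec_alpha[symmetric]) (auto simp: ind_def gC_def)
        then show ?thesis using mem[of m] by simp
      next
        case False
        then have jm: "j < m" using j m(2) by simp
        have "\<alpha> j = vec (gC m j m) - vec (gC m (j+1) m)" unfolding vec_diff
          using j jm by (intro vec_alpha[symmetric]) (auto simp: ind_def gC_def)
        then show ?thesis using mem[of j] mem[of "j+1"] jm by (simp add: span_diff)
      qed
    qed
  qed
  then show ?thesis using faceCm by (simp add: aff_dim_convex_hull)
qed

lemma affCi: assumes i: "i < m" shows "aff_dim (std_parabolic_face \<Phi> \<alpha> n i) < int n - 1"
proof -
  let ?S = "{\<beta> \<in> pos_roots \<Phi> \<alpha> n. cf \<beta> i = 2}"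
  have Sm: "cf \<beta> m = 1" if "\<beta> \<in> ?S" for \<beta>
  proof -
    from that have b: "\<beta> \<in> pos_roots \<Phi> \<alpha> n" "cf \<beta> i = 2" by auto
    from b(1) show ?thesis
    proof (cases rule: posC_E)
      case (I a b') then show ?thesis using b(2) i m(1) by (simp add: cf_indC ind_def split: if_splits)
    next
      case (G a b') then show ?thesis using m(1) by (simp add: cf_g ind_def gC_def)
    qed
  qed
  have "aff_dim ?S < int n - 1"
  proof (rule aff_dim_small)
    show "?S \<subseteq> {x. \<omega> m \<bullet> x = 1}" using Sm by (auto simp: cf_def inner_commute)
    show "(1::real) \<noteq> 0" by simp
    show "?S \<subseteq> {x. (\<omega> i - 2 *\<^sub>R \<omega> m) \<bullet> x = 0}"
    proof
      fix x assume x: "x \<in> ?S"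
      then have "x \<bullet> \<omega> i = 2" "x \<bullet> \<omega> m = 1" using Sm[OF x] by (auto simp: cf_def)
      then have "(\<omega> i - 2 *\<^sub>R \<omega> m) \<bullet> x = 0" by (simp add: inner_diff_right inner_commute[of _ x])
      then show "x \<in> {x. (\<omega> i - 2 *\<^sub>R \<omega> m) \<bullet> x = 0}" by simp
    qed
    have "\<alpha> m \<bullet> (\<omega> i - 2 *\<^sub>R \<omega> m) = -2" using omega[OF m(1)] i by (simp add: inner_diff_right)
    then show "\<omega> i - 2 *\<^sub>R \<omega> m \<noteq> 0" by auto
  qed
  moreover have "std_parabolic_face \<Phi> \<alpha> n i = convex hull ?S" using faceC[of i] i m(1) by simp
  ultimately show ?thesis by (simp add: aff_dim_convex_hull)
qed

lemma abelC: "abelian_ideal \<Phi> \<alpha> n Istar"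
  unfolding Istar_def using abelian_level[of m 1] boundCm by simp

lemma abel_subC: assumes J: "abelian_ideal \<Phi> \<alpha> n J" shows "J \<subseteq> Istar"
proof
  have Jpos: "J \<subseteq> pos_roots \<Phi> \<alpha> n" using J unfolding abelian_ideal_def by auto
  have up: "\<And>\<beta> \<gamma>. \<beta> \<in> J \<Longrightarrow> \<gamma> \<in> pos_roots \<Phi> \<alpha> n \<Longrightarrow> root_le \<alpha> n \<beta> \<gamma> \<Longrightarrow> \<gamma> \<in> J"
    using J unfolding abelian_ideal_def by auto
  have ab: "\<And>\<beta> \<gamma>. \<beta> \<in> J \<Longrightarrow> \<gamma> \<in> J \<Longrightarrow> \<beta> + \<gamma> \<notin> \<Phi>"
    using J unfolding abelian_ideal_def by auto
  fix \<beta> assume bJ: "\<beta> \<in> J"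
  then have bp: "\<beta> \<in> pos_roots \<Phi> \<alpha> n" using Jpos by blast
  then show "\<beta> \<in> Istar"
  proof (cases rule: posC_E)
    case (G a b) then show ?thesis using bp m(1) unfolding Istar_def by (simp add: cf_g ind_def gC_def)
  next
    case (I a b)
    have am: "a < m" using I by simp
    have g1p: "vec (ind a m) \<in> pos_roots \<Phi> \<alpha> n" unfolding posC using am by blast
    have "root_le \<alpha> n \<beta> (vec (ind a m))" unfolding root_le_iff I(3) using I m(1,2)
      by (auto simp: cf_indC ind_def)
    then have g1: "vec (ind a m) \<in> J" using up[OF bJ g1p] by simp
    have g2p: "vec (gC m a m) \<in> pos_roots \<Phi> \<alpha> n" unfolding posC using am by (intro disjI2 exI[of _ a] exI[of _ m]) simp
    have "root_le \<alpha> n (vec (ind a m)) (vec (gC m a m))" unfolding root_le_iff using m(1,2)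
      by (auto simp: cf_indC cf_g ind_def gC_def)
    then have g2: "vec (gC m a m) \<in> J" using up[OF g1 g2p] by simp
    have "vec (ind a m) + vec (gC m a m) = vec (gC m a a)" unfolding vec_add
      by (intro vec_eq) (auto simp: ind_def gC_def)
    moreover have "vec (gC m a a) \<in> \<Phi>" using exists_g am by simp
    ultimately have False using ab[OF g1 g2] by simp
    then show ?thesis ..
  qed
qed

lemma maxC: "max_abelian_ideal \<Phi> \<alpha> n I \<longleftrightarrow> I = Istar"
  unfolding max_abelian_ideal_def using abelC abel_subC by blast

theorem mainC:
  "{std_parabolic_face \<Phi> \<alpha> n i | i. i < n \<and>
            std_parabolic_face \<Phi> \<alpha> n i face_of convex hull \<Phi> \<and>
            aff_dim (std_parabolic_face \<Phi> \<alpha> n i) = int n - 1}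
         = {convex hull I | I. max_abelian_ideal \<Phi> \<alpha> n I}"
proof -
  have "{std_parabolic_face \<Phi> \<alpha> n i | i. i < n \<and>
            std_parabolic_face \<Phi> \<alpha> n i face_of convex hull \<Phi> \<and>
            aff_dim (std_parabolic_face \<Phi> \<alpha> n i) = int n - 1} = {convex hull Istar}"
  proof (intro equalityI subsetI)
    fix x assume "x \<in> {std_parabolic_face \<Phi> \<alpha> n i | i. i < n \<and>
            std_parabolic_face \<Phi> \<alpha> n i face_of convex hull \<Phi> \<and>
            aff_dim (std_parabolic_face \<Phi> \<alpha> n i) = int n - 1}"
    then obtain i where i: "i < n" "x = std_parabolic_face \<Phi> \<alpha> n i"
      "aff_dim (std_parabolic_face \<Phi> \<alpha> n i) = int n - 1" by blast
    have "i = m"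
    proof (rule ccontr)
      assume "i \<noteq> m"
      then have "i < m" using i(1) m(2) by simp
      then show False using affCi[of i] i(3) by simp
    qed
    then show "x \<in> {convex hull Istar}" using i faceCm by simp
  next
    fix x assume "x \<in> {convex hull Istar}"
    then have "x = std_parabolic_face \<Phi> \<alpha> n m" using faceCm by simp
    then show "x \<in> {std_parabolic_face \<Phi> \<alpha> n i | i. i < n \<and>
            std_parabolic_face \<Phi> \<alpha> n i face_of convex hull \<Phi> \<and>
            aff_dim (std_parabolic_face \<Phi> \<alpha> n i) = int n - 1}" using m(1) faceofCm affCm by blast
  qed
  also have "\<dots> = {convex hull I | I. max_abelian_ideal \<Phi> \<alpha> n I}"
    by (simp add: maxC)
  finally show ?thesis .
qed

end

theorem theorem5p7:
  fixes \<Phi> :: "'a::euclidean_space set" and \<alpha> :: "nat \<Rightarrow> 'a" and n :: nat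
  assumes "root_system \<Phi>"
    and "n = DIM('a)"
    and "is_base \<Phi> \<alpha> n"
    and "has_cartan \<alpha> n (cartan_A n) \<or> (n \<ge> 2 \<and> has_cartan \<alpha> n (cartan_C n))"
  shows "{std_parabolic_face \<Phi> \<alpha> n i | i. i < n \<and>
            std_parabolic_face \<Phi> \<alpha> n i face_of convex hull \<Phi> \<and>
            aff_dim (std_parabolic_face \<Phi> \<alpha> n i) = int n - 1}
         = {convex hull I | I. max_abelian_ideal \<Phi> \<alpha> n I}"
  using assms(4)
proof
  assume h: "has_cartan \<alpha> n (cartan_A n)"
  interpret rsA \<Phi> \<alpha> n
    by unfold_locales (use assms h in auto)
  show ?thesis by (rule mainA)
next
  assume h: "n \<ge> 2 \<and> has_cartan \<alpha> n (cartan_C n)"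
  interpret rsC \<Phi> \<alpha> n
    by unfold_locales (use assms h in auto)
  show ?thesis by (rule mainC)
qed

end
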